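(* Let $J\in\mathbb{S}$ and let $\Omega$ be a domain in $L_J$, symmetric with respect to the real axis and such that $\Omega\cap\mathbb{R}\neq\emptyset$. Let $\widetilde\Omega=\bigcup_{x+yJ\in\Omega}(x+y\mathbb{S})$ be its symmetric completion. Let $f:\Omega\to L_J$ be a holomorphic function and let $\tilde f:\widetilde\Omega\to\mathbb{H}$ be its (unique) regular extension. If $\tilde f(x_0+y_0J)=0$ with $y_0\neq0$, then $\tilde f(x_0+y_0L)=0$ for all $L\in\mathbb{S}$ if and only if $f(x_0+y_0J)=f(x_0-y_0J)=0$.
   Context: $\mathbb{H}$ denotes the quaternions, $\mathbb{S}=\{q\in\mathbb{H}: \mathrm{Re}(q)=0,\ |\mathrm{Im}(q)|=1\}$ the 2-sphere of imaginary units, $L_I=\mathbb{R}+\mathbb{R}I$ for $I\in\mathbb{S}$, and $x+y\mathbb{S}=\{x+yL:L\in\mathbb{S}\}$. A function $\Omega\to L_J$ is holomorphic if it is holomorphic under the identification $L_J\cong\mathbb{C}$, $x+yJ\mapsto x+iy$. A function $g:U\to\mathbb{H}$ on an open set $U\subseteq\mathbb{H}$ is (slice left) regular if for every $I\in\mathbb{S}$ its restriction to $U\cap L_I$ has continuous partial derivatives and satisfies $\left(\frac{\partial}{\partial x}+I\frac{\partial}{\partial y}\right)g(x+yI)=0$ there. The regular extension of $f$ is $\tilde f(x+yI)=\frac12[f(x+yJ)+f(x-yJ)]+I\frac12[J(f(x-yJ)-f(x+yJ))]$, the unique regular function on $\widetilde\Omega$ agreeing with $f$ on $\Omega$. *)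

theory Defs
  imports "HOL-Complex_Analysis.Complex_Analysis"
begin

datatype quat = Quat (qre: real) (qi: real) (qj: real) (qk: real)

instantiation quat :: "{zero, plus, minus, uminus, times}"
begin
definition "0 = Quat 0 0 0 0"
definition "p + q = Quat (qre p + qre q) (qi p + qi q) (qj p + qj q) (qk p + qk q)"
definition "p - q = Quat (qre p - qre q) (qi p - qi q) (qj p - qj q) (qk p - qk q)"
definition "- q = Quat (- qre q) (- qi q) (- qj q) (- qk q)"
definition "p * q = Quat
   (qre p * qre q - qi p * qi q - qj p * qj q - qk p * qk q)
   (qre p * qi q + qi p * qre q + qj p * qk q - qk p * qj q)
   (qre p * qj q - qi p * qk q + qj p * qre q + qk p * qi q)
   (qre p * qk q + qi p * qj q - qj p * qi q + qk p * qre q)"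
instance ..
end

definition qreal :: "real \<Rightarrow> quat" where
  "qreal r = Quat r 0 0 0"

definition qscale :: "real \<Rightarrow> quat \<Rightarrow> quat" where
  "qscale r q = Quat (r * qre q) (r * qi q) (r * qj q) (r * qk q)"

definition qim :: "quat \<Rightarrow> quat" where
  "qim q = Quat 0 (qi q) (qj q) (qk q)"

definition imnorm :: "quat \<Rightarrow> real" where
  "imnorm q = sqrt ((qi q)\<^sup>2 + (qj q)\<^sup>2 + (qk q)\<^sup>2)"

definition Sph :: "quat set" where
  "Sph = {q. qre q = 0 \<and> imnorm q = 1}"

definition LJ :: "quat \<Rightarrow> quat set" where
  "LJ I = {q. \<exists>x y. q = qreal x + qscale y I}"

definition pt :: "real \<Rightarrow> real \<Rightarrow> quat \<Rightarrow> quat" where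
  "pt x y I = qreal x + qscale y I"

definition cx_to_LJ :: "quat \<Rightarrow> complex \<Rightarrow> quat" where
  "cx_to_LJ J z = pt (Re z) (Im z) J"

definition LJ_to_cx :: "quat \<Rightarrow> quat \<Rightarrow> complex" where
  "LJ_to_cx J q = Complex (qre q) (qi q * qi J + qj q * qj J + qk q * qk J)"

definition domain_in_LJ :: "quat \<Rightarrow> quat set \<Rightarrow> bool" where
  "domain_in_LJ J \<Omega> \<longleftrightarrow> \<Omega> \<subseteq> LJ J \<and>
     open (cx_to_LJ J -` \<Omega>) \<and> connected (cx_to_LJ J -` \<Omega>)"

definition holo_LJ :: "quat \<Rightarrow> quat set \<Rightarrow> (quat \<Rightarrow> quat) \<Rightarrow> bool" where
  "holo_LJ J \<Omega> f \<longleftrightarrow> f ` \<Omega> \<subseteq> LJ J \<and>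
     (\<lambda>z. LJ_to_cx J (f (cx_to_LJ J z))) holomorphic_on (cx_to_LJ J -` \<Omega>)"

definition sym_completion :: "quat \<Rightarrow> quat set \<Rightarrow> quat set" where
  "sym_completion J \<Omega> = {q. \<exists>x y L. pt x y J \<in> \<Omega> \<and> L \<in> Sph \<and> q = pt x y L}"

text \<open>Regular extension: \<open>f~(x+yI) = \<onehalf>[f(x+yJ)+f(x-yJ)] + I \<onehalf>[J(f(x-yJ)-f(x+yJ))]\<close>,
  evaluated at the representation \<open>x = Re q\<close>, \<open>y = |Im q|\<close>, \<open>I = Im q/|Im q|\<close>
  (the formula is independent of the representation; for real \<open>q\<close> any \<open>I\<close> gives \<open>f(x)\<close>).\<close>
definition reg_ext :: "quat \<Rightarrow> (quat \<Rightarrow> quat) \<Rightarrow> quat \<Rightarrow> quat" where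
  "reg_ext J f q =
     (let x = qre q; y = imnorm q;
          I = (if y = 0 then J else qscale (1 / y) (qim q))
      in qscale (1/2) (f (pt x y J) + f (pt x (- y) J))
         + I * qscale (1/2) (J * (f (pt x (- y) J) - f (pt x y J))))"

end

theory Submission
  imports Defs
begin
lemma quat_eqI: "qre p = qre q \<Longrightarrow> qi p = qi q \<Longrightarrow> qj p = qj q \<Longrightarrow> qk p = qk q \<Longrightarrow> p = q"
  by (cases p; cases q) auto

lemma sph_comp: "L \<in> Sph \<Longrightarrow> qre L = 0 \<and> (qi L)\<^sup>2 + (qj L)\<^sup>2 + (qk L)\<^sup>2 = 1"
  unfolding Sph_def imnorm_def by (auto simp: real_sqrt_eq_1_iff)

lemma unit_mult_zero:
  assumes "L \<in> Sph" "L * q = 0" shows "q = 0"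
proof -
  from sph_comp[OF assms(1)] have r: "qre L = 0" and n: "(qi L)\<^sup>2 + (qj L)\<^sup>2 + (qk L)\<^sup>2 = 1" by auto
  define s where "s = (qi L)\<^sup>2 + (qj L)\<^sup>2 + (qk L)\<^sup>2"
  have "L * (L * q) = 0" using assms(2)
    by (simp add: times_quat_def zero_quat_def)
  moreover have "L * (L * q) = Quat (- qre q * s) (- qi q * s) (- qj q * s) (- qk q * s)"
    unfolding times_quat_def s_def using r by simp (simp add: power2_eq_square algebra_simps)
  ultimately show ?thesis using n s_def by (cases q) (simp add: zero_quat_def)
qed
lemma minus_sph: "L \<in> Sph \<Longrightarrow> - L \<in> Sph"
  unfolding Sph_def imnorm_def uminus_quat_def by auto

lemma swap_id: "qscale (1/2) (b + a) + (- L) * qscale (1/2) (J * (a - b)) =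
   qscale (1/2) (a + b) + L * qscale (1/2) (J * (b - a))"
  by (intro quat_eqI) (simp_all add: qscale_def plus_quat_def times_quat_def minus_quat_def uminus_quat_def algebra_simps)

lemma reg_ext_formula:
  assumes L: "L \<in> Sph" and y0: "y0 \<noteq> 0"
  shows "reg_ext J f (pt x0 y0 L) =
     qscale (1/2) (f (pt x0 y0 J) + f (pt x0 (- y0) J))
     + L * qscale (1/2) (J * (f (pt x0 (- y0) J) - f (pt x0 y0 J)))"
proof -
  from sph_comp[OF L] have r: "qre L = 0" and n: "(qi L)\<^sup>2 + (qj L)\<^sup>2 + (qk L)\<^sup>2 = 1" by auto
  have re: "qre (pt x0 y0 L) = x0" using r by (simp add: pt_def qreal_def qscale_def plus_quat_def)
  have im: "imnorm (pt x0 y0 L) = \<bar>y0\<bar>"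
  proof -
    have "(qi (pt x0 y0 L))\<^sup>2 + (qj (pt x0 y0 L))\<^sup>2 + (qk (pt x0 y0 L))\<^sup>2
        = y0\<^sup>2 * ((qi L)\<^sup>2 + (qj L)\<^sup>2 + (qk L)\<^sup>2)"
      by (simp add: pt_def qreal_def qscale_def plus_quat_def power_mult_distrib algebra_simps)
    thus ?thesis unfolding imnorm_def using n by simp
  qed
  have I: "qscale (1 / \<bar>y0\<bar>) (qim (pt x0 y0 L)) = (if y0 > 0 then L else - L)"
    using y0 r by (intro quat_eqI) (auto simp: qscale_def qim_def pt_def qreal_def plus_quat_def uminus_quat_def)
  show ?thesis
  proof (cases "y0 > 0")
    case True
    thus ?thesis unfolding reg_ext_def Let_def re im I using y0 by (simp add: abs_of_pos)
  next
    case False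
    hence "\<bar>y0\<bar> = - y0" by simp
    thus ?thesis
      unfolding reg_ext_def Let_def re im I using y0 False swap_id by simp
  qed
qed
theorem proposition5p2:
  fixes J :: quat and \<Omega> :: "quat set" and f :: "quat \<Rightarrow> quat"
    and x0 y0 :: real
  assumes "J \<in> Sph"
    and "domain_in_LJ J \<Omega>"
    and "\<forall>x y. pt x y J \<in> \<Omega> \<longrightarrow> pt x (- y) J \<in> \<Omega>"
    and "\<exists>x. qreal x \<in> \<Omega>"
    and "holo_LJ J \<Omega> f"
    and "pt x0 y0 J \<in> sym_completion J \<Omega>"
    and "reg_ext J f (pt x0 y0 J) = 0"
    and "y0 \<noteq> 0"
  shows "(\<forall>L\<in>Sph. reg_ext J f (pt x0 y0 L) = 0) \<longleftrightarrow>
         (f (pt x0 y0 J) = 0 \<and> f (pt x0 (- y0) J) = 0)"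
proof -
  define a where "a = f (pt x0 y0 J)"
  define b where "b = f (pt x0 (- y0) J)"
  define A where "A = qscale (1/2) (a + b)"
  define B where "B = qscale (1/2) (J * (b - a))"
  have F: "\<And>L. L \<in> Sph \<Longrightarrow> reg_ext J f (pt x0 y0 L) = A + L * B"
    using reg_ext_formula[OF _ assms(8)] unfolding A_def B_def a_def b_def by blast
  show ?thesis
  proof
    assume H: "\<forall>L\<in>Sph. reg_ext J f (pt x0 y0 L) = 0"
    have 1: "A + J * B = 0" using H F assms(1) by auto
    have 2: "A + (- J) * B = 0" using H F minus_sph[OF assms(1)] by auto
    have "J * B = 0" using 1 2
      by (cases A; cases "J * B"; simp add: plus_quat_def times_quat_def uminus_quat_def zero_quat_def algebra_simps)
    hence B0: "B = 0" using unit_mult_zero assms(1) by blast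
    have A0: "A = 0" using 1 B0 by (cases A) (simp add: times_quat_def zero_quat_def plus_quat_def)
    have "qscale (1/2) (J * (b - a)) = 0" using B0 B_def by simp
    hence "J * (b - a) = 0"
      by (cases "J * (b - a)") (simp add: qscale_def zero_quat_def)
    hence "b - a = 0" using unit_mult_zero assms(1) by blast
    moreover have "a + b = 0" using A0 unfolding A_def
      by (cases "a + b") (simp add: qscale_def zero_quat_def)
    ultimately have "a = 0 \<and> b = 0"
      by (cases a; cases b) (auto simp: plus_quat_def minus_quat_def zero_quat_def)
    thus "f (pt x0 y0 J) = 0 \<and> f (pt x0 (- y0) J) = 0" unfolding a_def b_def .
  next
    assume "f (pt x0 y0 J) = 0 \<and> f (pt x0 (- y0) J) = 0"
    hence "a = 0" "b = 0" unfolding a_def b_def by auto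
    hence "A = 0" "B = 0" unfolding A_def B_def
      by (simp_all add: qscale_def plus_quat_def minus_quat_def times_quat_def zero_quat_def)
    thus "\<forall>L\<in>Sph. reg_ext J f (pt x0 y0 L) = 0" using F
      by (simp add: times_quat_def zero_quat_def plus_quat_def)
  qed
qed
end
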